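(* There exist a family $\mathcal F_0$ of $3$ axis-parallel rectangles and a constant $\varepsilon>0$ such that $\pi_L(\mathcal F_0)\ge \pi(\mathcal F_0)+\varepsilon$.
   Context: For a finite family $\mathcal F$ of closed axis-parallel rectangles in the plane, a point set $P\subset\mathbb R^2$ is $\mathcal F$-piercing if every translate of every rectangle in $\mathcal F$ contains a point of $P$. The density of a point set $P$ is $\limsup_{r\to\infty} |P\cap[-r,r]^2|/(2r)^2$. $\pi(\mathcal F)$ is the infimum of the densities of $\mathcal F$-piercing point sets, and $\pi_L(\mathcal F)$ is the infimum of the densities of $\mathcal F$-piercing lattices, where a lattice $\{iu+jv:i,j\in\mathbb Z\}$ ($u,v$ linearly independent) has density $1/|\det[u,v]|$. *)

theory Defs
  imports "HOL-Analysis.Analysis"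
begin

definition is_rect :: "(real \<times> real) set \<Rightarrow> bool" where
  "is_rect R \<longleftrightarrow> (\<exists>a1 b1 a2 b2. a1 < b1 \<and> a2 < b2 \<and> R = {a1..b1} \<times> {a2..b2})"

definition translate :: "real \<times> real \<Rightarrow> (real \<times> real) set \<Rightarrow> (real \<times> real) set" where
  "translate v R = (\<lambda>p. p + v) ` R"

definition piercing :: "(real \<times> real) set set \<Rightarrow> (real \<times> real) set \<Rightarrow> bool" where
  "piercing F P \<longleftrightarrow> (\<forall>R\<in>F. \<forall>v. translate v R \<inter> P \<noteq> {})"

definition box_count :: "(real \<times> real) set \<Rightarrow> real \<Rightarrow> ereal" where
  "box_count P r = (if finite (P \<inter> ({-r..r} \<times> {-r..r}))
      then ereal (real (card (P \<inter> ({-r..r} \<times> {-r..r})))) else \<infinity>)"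

definition density :: "(real \<times> real) set \<Rightarrow> ereal" where
  "density P = Limsup at_top (\<lambda>r. box_count P r / ereal ((2 * r)^2))"

definition pi_dens :: "(real \<times> real) set set \<Rightarrow> ereal" where
  "pi_dens F = Inf {density P | P. piercing F P}"

definition lattice :: "real \<times> real \<Rightarrow> real \<times> real \<Rightarrow> (real \<times> real) set" where
  "lattice u v = {of_int i *\<^sub>R u + of_int j *\<^sub>R v | i j. True}"

definition det2 :: "real \<times> real \<Rightarrow> real \<times> real \<Rightarrow> real" where
  "det2 u v = fst u * snd v - snd u * fst v"

definition pi_lat :: "(real \<times> real) set set \<Rightarrow> ereal" where
  "pi_lat F = Inf {ereal (1 / \<bar>det2 u v\<bar>) | u v. det2 u v \<noteq> 0 \<and> piercing F (lattice u v)}"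

end

theory Submission
  imports Defs
begin


definition hit :: "(real \<times> real) set \<Rightarrow> real \<Rightarrow> real \<Rightarrow> bool" where
  "hit L a b \<longleftrightarrow> (\<forall>x0 y0. \<exists>p\<in>L. x0 \<le> fst p \<and> fst p \<le> x0 + a \<and> y0 \<le> snd p \<and> snd p \<le> y0 + b)"

definition detprop :: "(real \<times> real) set \<Rightarrow> real \<Rightarrow> bool" where
  "detprop L D' \<longleftrightarrow> (\<forall>p\<in>L. \<forall>q\<in>L. \<exists>k::int. det2 p q = of_int k * D')"

lemma hitD:
  assumes "hit L a b"
  obtains p where "p \<in> L" "x0 \<le> fst p" "fst p \<le> x0 + a" "y0 \<le> snd p" "snd p \<le> y0 + b"
  using assms unfolding hit_def by blast

lemma rep:
  assumes Det: "detprop L D'" and a: "a \<in> L" and e: "e \<in> L" and w: "w \<in> L"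
    and ae: "\<bar>det2 a e\<bar> = \<bar>D'\<bar>" and D0: "D' \<noteq> 0"
  obtains i j :: int where
    "fst w = of_int i * fst a + of_int j * fst e"
    "snd w = of_int i * snd a + of_int j * snd e"
    "det2 w e = of_int i * det2 a e" "det2 a w = of_int j * det2 a e"
proof -
  obtain k1 :: int where k1: "det2 w e = of_int k1 * D'" using Det w e unfolding detprop_def by blast
  obtain k2 :: int where k2: "det2 a w = of_int k2 * D'" using Det w a unfolding detprop_def by blast
  have nz: "det2 a e \<noteq> 0" using ae D0 by auto
  have cr1: "det2 a e * fst w = det2 w e * fst a + det2 a w * fst e"
    by (simp add: det2_def algebra_simps)
  have cr2: "det2 a e * snd w = det2 w e * snd a + det2 a w * snd e"
    by (simp add: det2_def algebra_simps)
  have "det2 a e = D' \<or> det2 a e = - D'" using ae by (auto simp: abs_if split: if_splits)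
  then show ?thesis
  proof
    assume h: "det2 a e = D'"
    show ?thesis
    proof (rule that[of k1 k2])
      show "det2 w e = of_int k1 * det2 a e" "det2 a w = of_int k2 * det2 a e" using k1 k2 h by auto
      have "D' * fst w = D' * (of_int k1 * fst a + of_int k2 * fst e)"
        using cr1 k1 k2 h by (simp add: algebra_simps)
      then show "fst w = of_int k1 * fst a + of_int k2 * fst e"
        using D0 by simp
      have "D' * snd w = D' * (of_int k1 * snd a + of_int k2 * snd e)"
        using cr2 k1 k2 h by (simp add: algebra_simps)
      then show "snd w = of_int k1 * snd a + of_int k2 * snd e"
        using D0 by simp
    qed
  next
    assume h: "det2 a e = - D'"
    show ?thesis
    proof (rule that[of "-k1" "-k2"])
      show "det2 w e = of_int (-k1) * det2 a e" "det2 a w = of_int (-k2) * det2 a e" using k1 k2 h by auto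
      have "D' * fst w = D' * (of_int (-k1) * fst a + of_int (-k2) * fst e)"
        using cr1 k1 k2 h by (simp add: algebra_simps)
      then show "fst w = of_int (-k1) * fst a + of_int (-k2) * fst e"
        using D0 by simp
      have "D' * snd w = D' * (of_int (-k1) * snd a + of_int (-k2) * snd e)"
        using cr2 k1 k2 h by (simp add: algebra_simps)
      then show "snd w = of_int (-k1) * snd a + of_int (-k2) * snd e"
        using D0 by simp
    qed
  qed
qed

lemma int_bound:
  fixes i :: int and X Y :: real
  assumes "Y = of_int i * X" "\<bar>Y\<bar> < of_int n * \<bar>X\<bar>" "X \<noteq> 0"
  shows "\<bar>i\<bar> < n"
proof -
  have "\<bar>of_int i\<bar> * \<bar>X\<bar> < of_int n * \<bar>X\<bar>" using assms by (simp add: abs_mult)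
  then have "\<bar>of_int i\<bar> < (of_int n :: real)" using assms(3) by (simp add: mult_less_cancel_right)
  then show ?thesis by linarith
qed

lemma abs_prod_le:
  fixes x y X Y :: real
  assumes "\<bar>x\<bar> \<le> X" "\<bar>y\<bar> \<le> Y"
  shows "\<bar>x * y\<bar> \<le> X * Y"
  using assms by (simp add: abs_mult mult_mono')

lemma abs_det_le:
  fixes x y z u X Y Z U :: real
  assumes "\<bar>x\<bar> \<le> X" "\<bar>y\<bar> \<le> Y" "\<bar>z\<bar> \<le> Z" "\<bar>u\<bar> \<le> U"
  shows "\<bar>x * y - z * u\<bar> \<le> X * Y + Z * U"
proof -
  have "\<bar>x * y - z * u\<bar> \<le> \<bar>x * y\<bar> + \<bar>z * u\<bar>" by (rule abs_triangle_ineq4)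
  also have "\<dots> \<le> X * Y + Z * U" using abs_prod_le[OF assms(1,2)] abs_prod_le[OF assms(3,4)] by linarith
  finally show ?thesis .
qed

lemma nlA:
  fixes p q A E :: real
  assumes "0 \<le> p" "p \<le> 1001/1000" "0 \<le> q" "q \<le> 1001/1000" "0 \<le> E"
    "A \<le> q + 1001/1000" "E \<le> p + 1001/1000"
  shows "A*E - p*q < 63/20"
proof -
  have "A*E \<le> (q + 1001/1000)*(p+1001/1000)"
    by (rule mult_mono) (use assms in auto)
  also have "\<dots> = p*q + 1001/1000*q + 1001/1000*p + 1002001/1000000" by (simp add: algebra_simps)
  finally show ?thesis using assms by linarith
qed

lemma nlB:
  fixes p q A E :: real
  assumes "p \<le> 1001/1000" "3*E - 4001/1000 \<le> p" "A \<le> 2" "A \<le> 2*q + 1001/1000"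
    "0 \<le> q" "0 \<le> p" "0 \<le> E" "0 \<le> A" "63/20 \<le> A*E - p*q"
  shows False
proof -
  have ps0: "0 \<le> p*q" using assms by simp
  have h1: "A*E \<le> 2*E" by (rule mult_right_mono) (use assms in auto)
  have E1: "E \<ge> 63/40" using h1 ps0 assms by linarith
  have E2: "E \<le> 5002/3000" using assms by linarith
  have h2: "A*E \<le> A*(5002/3000)" by (rule mult_left_mono) (use assms E2 in auto)
  have A1: "A * (5002/3000) \<ge> 63/20" using h2 ps0 assms by linarith
  have s1: "q \<ge> 444/1000" using A1 assms by linarith
  have p1: "p \<ge> 724/1000" using E1 assms by linarith
  have ps1: "(724/1000)*(444/1000) \<le> p*q" by (rule mult_mono) (use p1 s1 assms in auto)
  have "A*E \<le> 2*(5002/3000)" using h1 E2 by linarith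
  then show False using ps1 assms by linarith
qed

lemma nlD:
  fixes p q A E :: real
  assumes "p + 3*E \<le> 4001/1000" "0 \<le> p" "p \<le> 1001/1000" "0 \<le> q" "q \<le> 1001/1000"
    "0 \<le> A" "A \<le> 2" "0 \<le> E"
  shows "p*q + A*E < 63/20"
proof -
  have h1: "A*E \<le> 2*E" by (rule mult_right_mono) (use assms in auto)
  have h2: "p*(3*q - 2) \<le> p*(1003/1000)" by (rule mult_left_mono) (use assms in auto)
  have h3: "p*(3*q - 2) = 3*(p*q) - 2*p" by (simp add: algebra_simps)
  show ?thesis using h1 h2 h3 assms by linarith
qed

lemma nlF:
  fixes p q A E :: real
  assumes "A \<le> q + 1001/1000" "E \<le> p + 1001/1000" "p + 2*E \<le> 4001/1000"
    "2*A + q \<le> 4001/1000" "A + q \<le> 2001/1000"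
    "0 \<le> p" "p \<le> 1001/1000" "0 \<le> q" "q \<le> 1001/1000"
    "21/20 \<le> A" "A \<le> 2" "21/20 \<le> E" "E \<le> 2"
  shows "p*q + A*E < 63/20"
proof -
  have A1: "A \<le> 1501/1000" using assms by linarith
  show ?thesis
  proof (cases "p \<le> 2/3")
    case True
    have h1: "A*E \<le> A*(p + 1001/1000)" by (rule mult_left_mono) (use assms in auto)
    have h2: "p*(q + A) \<le> p*(2001/1000)" by (rule mult_left_mono) (use assms in auto)
    have h3: "p*(2001/1000) \<le> (2/3)*(2001/1000)" using True by simp
    have e1: "A*(p + 1001/1000) = p*A + 1001/1000*A" by (simp add: algebra_simps)
    have e2: "p*(q + A) = p*q + p*A" by (simp add: algebra_simps)
    show ?thesis using h1 h2 h3 e1 e2 A1 assms by linarith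
  next
    case False
    have h1: "A*(2*E) \<le> A*(4001/1000 - p)" by (rule mult_left_mono) (use assms in auto)
    have h2: "p*q \<le> p*(2001/1000 - A)" by (rule mult_left_mono) (use assms in auto)
    have h3: "0 \<le> (p - 2/3)*(A - 21/20)" using False assms by simp
    have e1: "A*(2*E) = 2*(A*E)" by simp
    have e2: "A*(4001/1000 - p) = 4001/1000*A - p*A" by (simp add: algebra_simps)
    have e3: "p*(2001/1000 - A) = 2001/1000*p - p*A" by (simp add: algebra_simps)
    have e4: "(p - 2/3)*(A - 21/20) = p*A - 21/20*p - 2/3*A + 7/10" by (simp add: field_simps)
    have k1: "2*(A*E) \<le> 4001/1000*A - p*A" using h1 e1 e2 by linarith
    have k2: "p*q \<le> 2001/1000*p - p*A" using h2 e3 by linarith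
    have k3: "p*A \<ge> 21/20*p + 2/3*A - 7/10" using h3 e4 by linarith
    show ?thesis using k1 k2 k3 A1 assms(6-13) by linarith
  qed
qed

lemma nlP2:
  fixes x y :: real
  assumes "0 \<le> x" "x \<le> 21/20" "0 \<le> y" "y \<le> 21/20"
  shows "2*x + 2*y - 98/100*(x*y) < 63/20"
proof -
  have h: "0 \<le> (21/20 - x)*(21/20 - y)" using assms by simp
  have e: "(21/20 - x)*(21/20 - y) = 441/400 - 21/20*x - 21/20*y + x*y" by (simp add: algebra_simps)
  show ?thesis using h e assms by linarith
qed


lemma core_plus:
  fixes L :: "(real\<times>real) set" and D' p A E q :: real
  assumes Det: "detprop L D'" and DD: "63/20 \<le> \<bar>D'\<bar>"
    and hH: "hit L 4 1" and hV: "hit L 1 4"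
    and aL: "a \<in> L" and cL: "c \<in> L"
    and ap: "fst a = p" and aA: "snd a = A" and cE: "fst c = E" and cq: "snd c = q"
    and rp: "1/1000 \<le> p" "p \<le> 1001/1000" and rA: "21/20 < A" "A \<le> 2"
    and rE: "21/20 < E" "E \<le> 2" and rq: "1/1000 \<le> q" "q \<le> 1001/1000"
    and ac: "\<bar>det2 a c\<bar> = \<bar>D'\<bar>"
  shows False
proof -
  have D0: "D' \<noteq> 0" using DD by auto
  have dac: "det2 a c = p*q - A*E" using ap aA cE cq by (simp add: det2_def)
  have AEbig: "21/20 * (21/20) < A*E" by (rule mult_strict_mono) (use rA rE in auto)
  have pqsmall: "p*q \<le> 1001/1000*(1001/1000)" by (rule mult_mono) (use rp rq in auto)
  have Dval: "\<bar>D'\<bar> = A*E - p*q" using ac dac AEbig pqsmall by linarith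
  have X: "(A - q \<le> 1001/1000 \<and> 2*E \<le> p + 4001/1000) \<or> (A - 2*q \<le> 1001/1000 \<and> 3*E - 4001/1000 \<le> p)"
  proof -
    obtain w where w: "w \<in> L" "E - 4 - 1/1000 \<le> fst w" "fst w \<le> E - 4 - 1/1000 + 4"
        "1/1000 \<le> snd w" "snd w \<le> 1/1000 + 1"
      using hitD[OF hH, of "E - 4 - 1/1000" "1/1000"] by blast
    obtain i j :: int where ij: "fst w = of_int i * fst a + of_int j * fst c"
        "snd w = of_int i * snd a + of_int j * snd c"
        "det2 w c = of_int i * det2 a c" "det2 a w = of_int j * det2 a c"
      using rep[OF Det aL cL w(1) ac D0] by blast
    have b1: "\<bar>det2 w c\<bar> < 2 * \<bar>det2 a c\<bar>"
    proof -
      have "\<bar>det2 w c\<bar> = \<bar>fst w * q - snd w * E\<bar>" using cE cq by (simp add: det2_def)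
      also have "\<dots> \<le> 3 * (1001/1000) + (1001/1000) * 2"
        by (rule abs_det_le) (use w rq rE in \<open>auto simp: abs_le_iff\<close>)
      finally show ?thesis using DD ac by linarith
    qed
    have i: "\<bar>i\<bar> < 2" by (rule int_bound[OF ij(3)]) (use b1 ac D0 in auto)
    have b2: "\<bar>det2 a w\<bar> < 3 * \<bar>det2 a c\<bar>"
    proof -
      have "\<bar>det2 a w\<bar> = \<bar>p * snd w - A * fst w\<bar>" using ap aA by (simp add: det2_def)
      also have "\<dots> \<le> (1001/1000) * (1001/1000) + 2 * 3"
        by (rule abs_det_le) (use w rp rA rE in \<open>auto simp: abs_le_iff\<close>)
      finally show ?thesis using DD ac by linarith
    qed
    have j: "\<bar>j\<bar> < 3" by (rule int_bound[OF ij(4)]) (use b2 ac D0 in auto)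
    have iss: "i = -1 \<or> i = 0 \<or> i = 1" using i by auto
    have js: "j = -2 \<or> j = -1 \<or> j = 0 \<or> j = 1 \<or> j = 2" using j by auto
    have fw: "fst w = of_int i * p + of_int j * E" using ij ap cE by simp
    have sw: "snd w = of_int i * A + of_int j * q" using ij aA cq by simp
    show ?thesis using iss js w(2-5) fw sw rp rA rE rq by auto
  qed
  have Y: "(E - p \<le> 1001/1000 \<and> 2*A \<le> 4001/1000 + q) \<or> (E - 2*p \<le> 1001/1000 \<and> 3*A \<le> 4001/1000 + q)"
  proof -
    obtain w where w: "w \<in> L" "1/1000 \<le> fst w" "fst w \<le> 1/1000 + 1"
        "A - 4 - 1/1000 \<le> snd w" "snd w \<le> A - 4 - 1/1000 + 4"
      using hitD[OF hV, of "1/1000" "A - 4 - 1/1000"] by blast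
    obtain i j :: int where ij: "fst w = of_int i * fst a + of_int j * fst c"
        "snd w = of_int i * snd a + of_int j * snd c"
        "det2 w c = of_int i * det2 a c" "det2 a w = of_int j * det2 a c"
      using rep[OF Det aL cL w(1) ac D0] by blast
    have b1: "\<bar>det2 w c\<bar> < 3 * \<bar>det2 a c\<bar>"
    proof -
      have "\<bar>det2 w c\<bar> = \<bar>fst w * q - snd w * E\<bar>" using cE cq by (simp add: det2_def)
      also have "\<dots> \<le> (1001/1000) * (1001/1000) + 3 * 2"
        by (rule abs_det_le) (use w rq rE rA in \<open>auto simp: abs_le_iff\<close>)
      finally show ?thesis using DD ac by linarith
    qed
    have i: "\<bar>i\<bar> < 3" by (rule int_bound[OF ij(3)]) (use b1 ac D0 in auto)
    have b2: "\<bar>det2 a w\<bar> < 2 * \<bar>det2 a c\<bar>"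
    proof -
      have "\<bar>det2 a w\<bar> = \<bar>p * snd w - A * fst w\<bar>" using ap aA by (simp add: det2_def)
      also have "\<dots> \<le> (1001/1000) * 3 + 2 * (1001/1000)"
        by (rule abs_det_le) (use w rp rA rE in \<open>auto simp: abs_le_iff\<close>)
      finally show ?thesis using DD ac by linarith
    qed
    have j: "\<bar>j\<bar> < 2" by (rule int_bound[OF ij(4)]) (use b2 ac D0 in auto)
    have iss: "i = -2 \<or> i = -1 \<or> i = 0 \<or> i = 1 \<or> i = 2" using i by auto
    have js: "j = -1 \<or> j = 0 \<or> j = 1" using j by auto
    have fw: "fst w = of_int i * p + of_int j * E" using ij ap cE by simp
    have sw: "snd w = of_int i * A + of_int j * q" using ij aA cq by simp
    show ?thesis using iss js w(2-5) fw sw rp rA rE rq by auto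
  qed
  have DA: "63/20 \<le> A*E - p*q" using Dval DD by linarith
  have DA': "63/20 \<le> E*A - q*p" using DA by (simp add: mult.commute)
  show False
  proof -
    { assume X1: "A - q \<le> 1001/1000" and Y1: "E - p \<le> 1001/1000"
      have "A*E - p*q < 63/20" by (rule nlA) (use X1 Y1 rp rq rE in auto)
      then have False using DA by linarith }
    moreover
    { assume X2: "A - 2*q \<le> 1001/1000" "3*E - 4001/1000 \<le> p"
      have False by (rule nlB[of p E A q]) (use X2 rp rq rE rA DA in auto) }
    moreover
    { assume Y2: "E - 2*p \<le> 1001/1000" "3*A \<le> 4001/1000 + q"
      have False by (rule nlB[of q A E p]) (use Y2 rp rq rE rA DA' in auto) }
    ultimately show False using X Y by blast
  qed
qed


lemma core_minus:
  fixes L :: "(real\<times>real) set" and D' p A E q :: real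
  assumes Det: "detprop L D'" and DD: "63/20 \<le> \<bar>D'\<bar>"
    and hH: "hit L 4 1" and hV: "hit L 1 4" and hS: "hit L 2 2"
    and aL: "a \<in> L" and cL: "c \<in> L"
    and ap: "fst a = p" and aA: "snd a = A" and cE: "fst c = - E" and cq: "snd c = q"
    and rp: "1/1000 \<le> p" "p \<le> 1001/1000" and rA: "21/20 < A" "A \<le> 2"
    and rE: "21/20 < E" "E \<le> 2" and rq: "1/1000 \<le> q" "q \<le> 1001/1000"
    and ac: "\<bar>det2 a c\<bar> = \<bar>D'\<bar>"
  shows False
proof -
  have D0: "D' \<noteq> 0" using DD by auto
  have dac: "det2 a c = p*q + A*E" using ap aA cE cq by (simp add: det2_def)
  have pq0: "0 \<le> p*q" using rp rq by simp
  have AE0: "0 \<le> A*E" using rA rE by simp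
  have Dval: "\<bar>D'\<bar> = p*q + A*E" using ac dac pq0 AE0 by linarith
  have H: "p + 2*E \<le> 4001/1000 \<and> (A - q \<le> 1001/1000 \<or> p + 3*E \<le> 4001/1000)"
  proof -
    obtain w where w: "w \<in> L" "- E + 1/1000 \<le> fst w" "fst w \<le> - E + 1/1000 + 4"
        "1/1000 \<le> snd w" "snd w \<le> 1/1000 + 1"
      using hitD[OF hH, of "- E + 1/1000" "1/1000"] by blast
    obtain i j :: int where ij: "fst w = of_int i * fst a + of_int j * fst c"
        "snd w = of_int i * snd a + of_int j * snd c"
        "det2 w c = of_int i * det2 a c" "det2 a w = of_int j * det2 a c"
      using rep[OF Det aL cL w(1) ac D0] by blast
    have b1: "\<bar>det2 w c\<bar> < 2 * \<bar>det2 a c\<bar>"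
    proof -
      have "\<bar>det2 w c\<bar> = \<bar>fst w * q - snd w * (- E)\<bar>" using cE cq by (simp add: det2_def)
      also have "\<dots> \<le> 3 * (1001/1000) + (1001/1000) * 2"
        by (rule abs_det_le) (use w rq rE in \<open>auto simp: abs_le_iff\<close>)
      finally show ?thesis using DD ac by linarith
    qed
    have i: "\<bar>i\<bar> < 2" by (rule int_bound[OF ij(3)]) (use b1 ac D0 in auto)
    have b2: "\<bar>det2 a w\<bar> < 3 * \<bar>det2 a c\<bar>"
    proof -
      have "\<bar>det2 a w\<bar> = \<bar>p * snd w - A * fst w\<bar>" using ap aA by (simp add: det2_def)
      also have "\<dots> \<le> (1001/1000) * (1001/1000) + 2 * 3"
        by (rule abs_det_le) (use w rp rA rE in \<open>auto simp: abs_le_iff\<close>)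
      finally show ?thesis using DD ac by linarith
    qed
    have j: "\<bar>j\<bar> < 3" by (rule int_bound[OF ij(4)]) (use b2 ac D0 in auto)
    have iss: "i = -1 \<or> i = 0 \<or> i = 1" using i by auto
    have js: "j = -2 \<or> j = -1 \<or> j = 0 \<or> j = 1 \<or> j = 2" using j by auto
    have fw: "fst w = of_int i * p - of_int j * E" using ij ap cE by simp
    have sw: "snd w = of_int i * A + of_int j * q" using ij aA cq by simp
    show ?thesis using iss js w(2-5) fw sw rp rA rE rq by auto
  qed
  have V: "2*A + q \<le> 4001/1000 \<and> (E - p \<le> 1001/1000 \<or> 3*A + q \<le> 4001/1000)"
  proof -
    obtain w where w: "w \<in> L" "1/1000 \<le> fst w" "fst w \<le> 1/1000 + 1"
        "A - 4 - 1/1000 \<le> snd w" "snd w \<le> A - 4 - 1/1000 + 4"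
      using hitD[OF hV, of "1/1000" "A - 4 - 1/1000"] by blast
    obtain i j :: int where ij: "fst w = of_int i * fst a + of_int j * fst c"
        "snd w = of_int i * snd a + of_int j * snd c"
        "det2 w c = of_int i * det2 a c" "det2 a w = of_int j * det2 a c"
      using rep[OF Det aL cL w(1) ac D0] by blast
    have b1: "\<bar>det2 w c\<bar> < 3 * \<bar>det2 a c\<bar>"
    proof -
      have "\<bar>det2 w c\<bar> = \<bar>fst w * q - snd w * (- E)\<bar>" using cE cq by (simp add: det2_def)
      also have "\<dots> \<le> (1001/1000) * (1001/1000) + 3 * 2"
        by (rule abs_det_le) (use w rq rE rA in \<open>auto simp: abs_le_iff\<close>)
      finally show ?thesis using DD ac by linarith
    qed
    have i: "\<bar>i\<bar> < 3" by (rule int_bound[OF ij(3)]) (use b1 ac D0 in auto)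
    have b2: "\<bar>det2 a w\<bar> < 2 * \<bar>det2 a c\<bar>"
    proof -
      have "\<bar>det2 a w\<bar> = \<bar>p * snd w - A * fst w\<bar>" using ap aA by (simp add: det2_def)
      also have "\<dots> \<le> (1001/1000) * 3 + 2 * (1001/1000)"
        by (rule abs_det_le) (use w rp rA rE in \<open>auto simp: abs_le_iff\<close>)
      finally show ?thesis using DD ac by linarith
    qed
    have j: "\<bar>j\<bar> < 2" by (rule int_bound[OF ij(4)]) (use b2 ac D0 in auto)
    have iss: "i = -2 \<or> i = -1 \<or> i = 0 \<or> i = 1 \<or> i = 2" using i by auto
    have js: "j = -1 \<or> j = 0 \<or> j = 1" using j by auto
    have fw: "fst w = of_int i * p - of_int j * E" using ij ap cE by simp
    have sw: "snd w = of_int i * A + of_int j * q" using ij aA cq by simp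
    show ?thesis using iss js w(2-5) fw sw rp rA rE rq by auto
  qed
  have S: "A + q \<le> 2001/1000 \<or> p + E \<le> 2001/1000"
  proof -
    obtain w where w: "w \<in> L" "1/1000 \<le> fst w" "fst w \<le> 1/1000 + 2"
        "- q + 1/1000 \<le> snd w" "snd w \<le> - q + 1/1000 + 2"
      using hitD[OF hS, of "1/1000" "- q + 1/1000"] by blast
    obtain i j :: int where ij: "fst w = of_int i * fst a + of_int j * fst c"
        "snd w = of_int i * snd a + of_int j * snd c"
        "det2 w c = of_int i * det2 a c" "det2 a w = of_int j * det2 a c"
      using rep[OF Det aL cL w(1) ac D0] by blast
    have b1: "\<bar>det2 w c\<bar> < 2 * \<bar>det2 a c\<bar>"
    proof -
      have "\<bar>det2 w c\<bar> = \<bar>fst w * q - snd w * (- E)\<bar>" using cE cq by (simp add: det2_def)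
      also have "\<dots> \<le> (2001/1000) * (1001/1000) + 2 * 2"
        by (rule abs_det_le) (use w rq rE rA in \<open>auto simp: abs_le_iff\<close>)
      finally show ?thesis using DD ac by linarith
    qed
    have i: "\<bar>i\<bar> < 2" by (rule int_bound[OF ij(3)]) (use b1 ac D0 in auto)
    have b2: "\<bar>det2 a w\<bar> < 2 * \<bar>det2 a c\<bar>"
    proof -
      have "\<bar>det2 a w\<bar> = \<bar>p * snd w - A * fst w\<bar>" using ap aA by (simp add: det2_def)
      also have "\<dots> \<le> (1001/1000) * 2 + 2 * (2001/1000)"
        by (rule abs_det_le) (use w rp rA rq in \<open>auto simp: abs_le_iff\<close>)
      finally show ?thesis using DD ac by linarith
    qed
    have j: "\<bar>j\<bar> < 2" by (rule int_bound[OF ij(4)]) (use b2 ac D0 in auto)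
    have iss: "i = -1 \<or> i = 0 \<or> i = 1" using i by auto
    have js: "j = -1 \<or> j = 0 \<or> j = 1" using j by auto
    have fw: "fst w = of_int i * p - of_int j * E" using ij ap cE by simp
    have sw: "snd w = of_int i * A + of_int j * q" using ij aA cq by simp
    show ?thesis using iss js w(2-5) fw sw rp rA rE rq by auto
  qed
  have DA: "63/20 \<le> p*q + A*E" using Dval DD by linarith
  show False
  proof -
    { assume H2: "p + 3*E \<le> 4001/1000"
      have "p*q + A*E < 63/20" by (rule nlD) (use H2 rp rq rE rA in auto)
      then have False using DA by linarith }
    moreover
    { assume V2: "3*A + q \<le> 4001/1000"
      have "q*p + E*A < 63/20" by (rule nlD) (use V2 rp rq rE rA in auto)
      then have False using DA by (simp add: mult.commute) }
    moreover
    { assume H1: "A - q \<le> 1001/1000" and V1: "E - p \<le> 1001/1000" and S1: "A + q \<le> 2001/1000"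
      have "p*q + A*E < 63/20" by (rule nlF) (use H1 V1 S1 H V rp rq rE rA in auto)
      then have False using DA by linarith }
    moreover
    { assume H1: "A - q \<le> 1001/1000" and V1: "E - p \<le> 1001/1000" and S2: "p + E \<le> 2001/1000"
      have "q*p + E*A < 63/20" by (rule nlF) (use H1 V1 S2 H V rp rq rE rA in auto)
      then have False using DA by (simp add: mult.commute) }
    ultimately show False using H V S by blast
  qed
qed


definition NS :: "(real \<times> real) set \<Rightarrow> bool" where
  "NS L \<longleftrightarrow> (\<forall>w\<in>L. w \<noteq> 0 \<longrightarrow> \<not> (\<bar>fst w\<bar> \<le> 21/20 \<and> \<bar>snd w\<bar> \<le> 21/20))"

lemma core_all:
  fixes L :: "(real\<times>real) set" and D' :: real
  assumes Det: "detprop L D'" and DD: "63/20 \<le> \<bar>D'\<bar>"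
    and hH: "hit L 4 1" and hV: "hit L 1 4" and hS: "hit L 2 2" and ns: "NS L"
    and aL: "a \<in> L" and ra: "1/1000 \<le> fst a" "fst a \<le> 1001/1000" "21/20 < snd a" "snd a \<le> 2"
  shows False
proof -
  have D0: "D' \<noteq> 0" using DD by auto
  obtain c where c: "c \<in> L" "-2 \<le> fst c" "fst c \<le> -2 + 4" "1/1000 \<le> snd c" "snd c \<le> 1/1000 + 1"
    using hitD[OF hH, of "-2" "1/1000"] by blast
  have cnz: "c \<noteq> 0" using c(4) by auto
  have c1: "21/20 < \<bar>fst c\<bar>" using ns c cnz unfolding NS_def by force
  obtain k :: int where k: "det2 a c = of_int k * D'" using Det aL c(1) unfolding detprop_def by blast
  have b: "\<bar>det2 a c\<bar> < 2 * \<bar>D'\<bar>"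
  proof -
    have "\<bar>det2 a c\<bar> = \<bar>fst a * snd c - snd a * fst c\<bar>" by (simp add: det2_def)
    also have "\<dots> \<le> (1001/1000) * (1001/1000) + 2 * 2"
      by (rule abs_det_le) (use ra c in \<open>auto simp: abs_le_iff\<close>)
    finally show ?thesis using DD by linarith
  qed
  have kb: "\<bar>k\<bar> < 2" by (rule int_bound[OF k]) (use b D0 in auto)
  have k0: "k \<noteq> 0"
  proof
    assume "k = 0"
    then have "fst a * snd c = snd a * fst c" using k by (simp add: det2_def)
    moreover have "\<bar>fst a * snd c\<bar> \<le> (1001/1000) * (1001/1000)"
      by (rule abs_prod_le) (use ra c in \<open>auto simp: abs_le_iff\<close>)
    moreover have "21/20 * (21/20) < \<bar>snd a * fst c\<bar>"
      unfolding abs_mult by (rule mult_strict_mono) (use ra c1 in auto)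
    ultimately show False by linarith
  qed
  have ac: "\<bar>det2 a c\<bar> = \<bar>D'\<bar>"
  proof -
    have "k = 1 \<or> k = -1" using kb k0 by auto
    then show ?thesis using k by (auto simp: abs_mult)
  qed
  show False
  proof (cases "fst c > 0")
    case True
    show False
      by (rule core_plus[OF Det DD hH hV aL c(1) refl refl refl refl])
         (use ra c c1 True ac in auto)
  next
    case False
    show False
      by (rule core_minus[where E = "- fst c", OF Det DD hH hV hS aL c(1) refl refl _ refl])
         (use ra c c1 False ac in auto)
  qed
qed


definition yflip :: "real \<times> real \<Rightarrow> real \<times> real" where
  "yflip p = (fst p, - snd p)"

lemma refl_refl[simp]: "yflip (yflip p) = p" by (simp add: yflip_def)
lemma fst_refl[simp]: "fst (yflip p) = fst p" by (simp add: yflip_def)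
lemma snd_refl[simp]: "snd (yflip p) = - snd p" by (simp add: yflip_def)
lemma det2_refl: "det2 (yflip p) (yflip q) = - det2 p q" by (simp add: det2_def yflip_def)

lemma refl_mem: "yflip p \<in> yflip ` L \<longleftrightarrow> p \<in> L"
  by (metis (no_types, lifting) image_iff refl_refl)

lemma detprop_refl: "detprop L D' \<Longrightarrow> detprop (yflip ` L) (- D')"
  unfolding detprop_def by (auto simp: det2_refl)

lemma hit_refl:
  assumes "hit L a b" shows "hit (yflip ` L) a b"
  unfolding hit_def
proof (intro allI)
  fix x0 y0 :: real
  obtain p where p: "p \<in> L" "x0 \<le> fst p" "fst p \<le> x0 + a" "- y0 - b \<le> snd p" "snd p \<le> - y0 - b + b"
    using hitD[OF assms, of x0 "- y0 - b"] by blast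
  show "\<exists>p\<in>yflip ` L. x0 \<le> fst p \<and> fst p \<le> x0 + a \<and> y0 \<le> snd p \<and> snd p \<le> y0 + b"
    using p by (intro bexI[of _ "yflip p"]) auto
qed

lemma NS_refl: "NS L \<Longrightarrow> NS (yflip ` L)"
  unfolding NS_def by (auto simp: yflip_def prod_eq_iff)

lemma width_lemma:
  fixes L :: "(real\<times>real) set"
  assumes Det: "detprop L D'" and wL: "w \<in> L" and wnz: "w \<noteq> 0"
    and small: "2*\<bar>fst w\<bar> + 2*\<bar>snd w\<bar> < \<bar>D'\<bar>"
  shows "\<not> hit L 2 2"
proof
  assume h: "hit L 2 2"
  define n where "n = (fst w)^2 + (snd w)^2"
  have "fst w \<noteq> 0 \<or> snd w \<noteq> 0" using wnz by (auto simp: prod_eq_iff)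
  then have npos: "n > 0" unfolding n_def by (simp add: sum_power2_gt_zero_iff)
  define k0 where "k0 = (D'/2) / n"
  define c1 where "c1 = - k0 * snd w"
  define c2 where "c2 = k0 * fst w"
  have "fst w * c2 - snd w * c1 = k0 * n"
    unfolding c1_def c2_def n_def by (simp add: power2_eq_square algebra_simps)
  then have phic: "fst w * c2 - snd w * c1 = D'/2" using npos by (simp add: k0_def)
  obtain p where p: "p \<in> L" "c1 - 1 \<le> fst p" "fst p \<le> c1 - 1 + 2" "c2 - 1 \<le> snd p" "snd p \<le> c2 - 1 + 2"
    using hitD[OF h, of "c1 - 1" "c2 - 1"] by blast
  obtain k :: int where k: "det2 w p = of_int k * D'" using Det wL p(1) unfolding detprop_def by blast
  have e: "det2 w p - D'/2 = fst w * (snd p - c2) - snd w * (fst p - c1)"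
    using phic by (simp add: det2_def algebra_simps)
  have "\<bar>fst w * (snd p - c2) - snd w * (fst p - c1)\<bar> \<le> \<bar>fst w\<bar> * 1 + \<bar>snd w\<bar> * 1"
    by (rule abs_det_le) (use p in \<open>auto simp: abs_le_iff\<close>)
  then have "\<bar>of_int k * D' - D'/2\<bar> < \<bar>D'\<bar>/2" using e k small by linarith
  then have "\<bar>(of_int k - 1/2) * D'\<bar> < \<bar>D'\<bar>/2" by (simp add: algebra_simps)
  then have "\<bar>of_int k - 1/2\<bar> * \<bar>D'\<bar> < (1/2) * \<bar>D'\<bar>" by (simp add: abs_mult)
  then have "\<bar>of_int k - 1/2\<bar> < (1/2::real)" by (rule mult_right_less_imp_less) simp
  then have "0 < k" "k < 1" by linarith+
  then show False by simp
qed

lemma chord_lemma: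
  fixes L :: "(real\<times>real) set"
  assumes Det: "detprop L D'" and DD: "63/20 \<le> \<bar>D'\<bar>" and wL: "w \<in> L"
    and x: "0 < fst w" "fst w \<le> 21/20" and y: "0 < snd w" "snd w \<le> 21/20"
    and mini: "\<And>\<tau>. 0 < \<tau> \<Longrightarrow> \<tau> < 1 \<Longrightarrow> \<tau> *\<^sub>R w \<notin> L"
  shows "\<not> hit L 2 2"
proof
  assume h: "hit L 2 2"
  define X where "X = fst w"
  define Y where "Y = snd w"
  obtain p where p: "p \<in> L" "99/100*X - 2 \<le> fst p" "fst p \<le> 99/100*X - 2 + 2"
      "1/100*Y \<le> snd p" "snd p \<le> 1/100*Y + 2"
    using hitD[OF h, of "99/100*X - 2" "1/100*Y"] by blast
  have Xp: "0 < X" "X \<le> 21/20" and Yp: "0 < Y" "Y \<le> 21/20" using x y by (auto simp: X_def Y_def)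
  have d: "det2 w p = X * snd p - Y * fst p" by (simp add: det2_def X_def Y_def)
  have l1: "1/100*(X*Y) \<le> X * snd p"
  proof -
    have "X * (1/100*Y) \<le> X * snd p" by (rule mult_left_mono) (use p Xp in auto)
    then show ?thesis by simp
  qed
  have l2: "Y * fst p \<le> 99/100*(X*Y)"
  proof -
    have "Y * fst p \<le> Y * (99/100*X)" by (rule mult_left_mono) (use p Yp in auto)
    then show ?thesis by (simp add: algebra_simps)
  qed
  have u1: "X * snd p \<le> 1/100*(X*Y) + 2*X"
  proof -
    have "X * snd p \<le> X * (1/100*Y + 2)" by (rule mult_left_mono) (use p Xp in auto)
    also have "\<dots> = 1/100*(X*Y) + 2*X" by (simp add: algebra_simps)
    finally show ?thesis .
  qed
  have u2: "99/100*(X*Y) - 2*Y \<le> Y * fst p"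
  proof -
    have "Y * (99/100*X - 2) \<le> Y * fst p" by (rule mult_left_mono) (use p Yp in auto)
    moreover have "Y * (99/100*X - 2) = 99/100*(X*Y) - 2*Y" by (simp add: algebra_simps)
    ultimately show ?thesis by simp
  qed
  have xy: "X * Y \<le> 21/20 * (21/20)" by (rule mult_mono) (use Xp Yp in auto)
  have P: "2*X + 2*Y - 98/100*(X*Y) < 63/20" by (rule nlP2) (use Xp Yp in auto)
  have lo: "- (63/20) < det2 w p" using d l1 l2 xy by linarith
  have hi: "det2 w p < 63/20" using d u1 u2 P by linarith
  have bd: "\<bar>det2 w p\<bar> < 1 * \<bar>D'\<bar>" using lo hi DD by linarith
  obtain k :: int where k: "det2 w p = of_int k * D'" using Det wL p(1) unfolding detprop_def by blast
  have "\<bar>k\<bar> < 1" by (rule int_bound[OF k]) (use bd DD in auto)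
  then have "det2 w p = 0" using k by simp
  then have par: "X * snd p = Y * fst p" using d by simp
  define \<tau> where "\<tau> = fst p / X"
  have pfst: "fst p = \<tau> * X" using Xp by (simp add: \<tau>_def)
  have psnd: "snd p = \<tau> * Y"
  proof -
    have "X * snd p = X * (\<tau> * Y)" using par pfst by (simp add: algebra_simps)
    then show ?thesis using Xp by simp
  qed
  have t1: "\<tau> \<le> 99/100"
  proof -
    have "\<tau> * X \<le> 99/100 * X" using p pfst by simp
    then show ?thesis using Xp by simp
  qed
  have t2: "1/100 \<le> \<tau>"
  proof -
    have "1/100 * Y \<le> \<tau> * Y" using p psnd by simp
    then show ?thesis using Yp by simp
  qed
  have "p = \<tau> *\<^sub>R w" using pfst psnd by (simp add: prod_eq_iff X_def Y_def)
  then show False using mini[of \<tau>] t1 t2 p(1) by simp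
qed


lemma short_P2:
  fixes L :: "(real\<times>real) set"
  assumes Det: "detprop L D'" and DD: "63/20 \<le> \<bar>D'\<bar>"
    and neg: "\<And>p. p \<in> L \<Longrightarrow> - p \<in> L"
    and fin: "finite {p\<in>L. \<bar>fst p\<bar> \<le> 21/20 \<and> \<bar>snd p\<bar> \<le> 21/20}"
    and w0: "w0 \<in> L" "w0 \<noteq> 0" "\<bar>fst w0\<bar> \<le> 21/20" "\<bar>snd w0\<bar> \<le> 21/20"
  shows "\<not> hit L 2 2"
proof
  assume h: "hit L 2 2"
  define M where "M = {p\<in>L. p \<noteq> 0 \<and> \<bar>fst p\<bar> \<le> 21/20 \<and> \<bar>snd p\<bar> \<le> 21/20}"
  define f :: "real \<times> real \<Rightarrow> real" where "f p = \<bar>fst p\<bar> + \<bar>snd p\<bar>" for p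
  have finM: "finite M" by (rule finite_subset[OF _ fin]) (auto simp: M_def)
  have "w0 \<in> M" using w0 by (simp add: M_def)
  then have neM: "M \<noteq> {}" by auto
  have "Min (f ` M) \<in> f ` M" using finM neM by (intro Min_in) auto
  then obtain w where wM: "w \<in> M" and wf: "f w = Min (f ` M)" by auto
  have wmin: "f w \<le> f q" if "q \<in> M" for q using Min_le[of "f ` M" "f q"] finM that wf by auto
  have wL: "w \<in> L" and wnz: "w \<noteq> 0" and wb: "\<bar>fst w\<bar> \<le> 21/20" "\<bar>snd w\<bar> \<le> 21/20"
    using wM by (auto simp: M_def)
  have fpos: "0 < f w" using wnz by (auto simp: f_def prod_eq_iff)
  have mini: "\<tau> *\<^sub>R w \<notin> L" if "0 < \<tau>" "\<tau> < 1" for \<tau>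
  proof
    assume tL: "\<tau> *\<^sub>R w \<in> L"
    have "\<tau> *\<^sub>R w \<noteq> 0" using that wnz by simp
    moreover have "\<tau> * \<bar>fst w\<bar> \<le> \<bar>fst w\<bar>" "\<tau> * \<bar>snd w\<bar> \<le> \<bar>snd w\<bar>"
      by (rule mult_left_le_one_le; use that in auto)+
    then have "\<bar>fst (\<tau> *\<^sub>R w)\<bar> \<le> 21/20" "\<bar>snd (\<tau> *\<^sub>R w)\<bar> \<le> 21/20"
      using that wb by (auto simp: abs_mult)
    ultimately have "\<tau> *\<^sub>R w \<in> M" using tL by (auto simp: M_def)
    then have "f w \<le> f (\<tau> *\<^sub>R w)" by (rule wmin)
    moreover have "f (\<tau> *\<^sub>R w) = \<tau> * f w" using that by (simp add: f_def abs_mult algebra_simps)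
    ultimately show False using fpos that by (simp add: mult_le_cancel_right1)
  qed
  show False
  proof (cases "fst w = 0 \<or> snd w = 0")
    case True
    have "2*\<bar>fst w\<bar> + 2*\<bar>snd w\<bar> < \<bar>D'\<bar>" using True wb DD by auto
    then show False using width_lemma[OF Det wL wnz] h by blast
  next
    case False
    define w' where "w' = (if fst w > 0 then w else - w)"
    have w'L: "w' \<in> L" using wL neg by (simp add: w'_def)
    have w'1: "0 < fst w'" "fst w' \<le> 21/20" using False wb by (auto simp: w'_def)
    have w'2: "snd w' \<noteq> 0" "\<bar>snd w'\<bar> \<le> 21/20" using False wb by (auto simp: w'_def)
    have mini': "\<tau> *\<^sub>R w' \<notin> L" if "0 < \<tau>" "\<tau> < 1" for \<tau>
    proof (cases "fst w > 0")
      case True then show ?thesis using mini[OF that] by (simp add: w'_def)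
    next
      case False
      show ?thesis
      proof
        assume "\<tau> *\<^sub>R w' \<in> L"
        then have "- (\<tau> *\<^sub>R w') \<in> L" by (rule neg)
        then have "\<tau> *\<^sub>R w \<in> L" using False by (simp add: w'_def)
        then show False using mini[OF that] by simp
      qed
    qed
    show False
    proof (cases "snd w' > 0")
      case True
      have "\<not> hit L 2 2" by (rule chord_lemma[OF Det DD w'L]) (use w'1 w'2 True mini' in auto)
      then show False using h by simp
    next
      case False
      have "\<not> hit (yflip ` L) 2 2"
      proof (rule chord_lemma[OF detprop_refl[OF Det], of "yflip w'"])
        show "63/20 \<le> \<bar>- D'\<bar>" using DD by simp
        show "yflip w' \<in> yflip ` L" using w'L by simp
        show "0 < fst (yflip w')" "fst (yflip w') \<le> 21/20" using w'1 by auto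
        show "0 < snd (yflip w')" "snd (yflip w') \<le> 21/20" using w'2 False by auto
        fix \<tau> :: real assume t: "0 < \<tau>" "\<tau> < 1"
        show "\<tau> *\<^sub>R yflip w' \<notin> yflip ` L"
        proof
          assume "\<tau> *\<^sub>R yflip w' \<in> yflip ` L"
          moreover have "\<tau> *\<^sub>R yflip w' = yflip (\<tau> *\<^sub>R w')" by (simp add: yflip_def)
          ultimately have "\<tau> *\<^sub>R w' \<in> L" using refl_mem by metis
          then show False using mini'[OF t] by simp
        qed
      qed
      then show False using hit_refl[OF h] by simp
    qed
  qed
qed

lemma lattice_mem: "p \<in> lattice u v \<longleftrightarrow> (\<exists>i j::int. p = of_int i *\<^sub>R u + of_int j *\<^sub>R v)"
  unfolding lattice_def by blast

lemma lattice_det: "detprop (lattice u v) (det2 u v)"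
  unfolding detprop_def
proof (intro ballI)
  fix p q assume "p \<in> lattice u v" "q \<in> lattice u v"
  then obtain i j k l :: int where p: "p = of_int i *\<^sub>R u + of_int j *\<^sub>R v"
    and q: "q = of_int k *\<^sub>R u + of_int l *\<^sub>R v" unfolding lattice_mem by blast
  have "det2 p q = of_int (i*l - j*k) * det2 u v"
    unfolding p q by (simp add: det2_def algebra_simps)
  then show "\<exists>k::int. det2 p q = of_int k * det2 u v" by blast
qed

lemma lattice_neg: "p \<in> lattice u v \<Longrightarrow> - p \<in> lattice u v"
proof -
  assume "p \<in> lattice u v"
  then obtain i j :: int where p: "p = of_int i *\<^sub>R u + of_int j *\<^sub>R v" unfolding lattice_mem by blast
  have "- p = of_int (-i) *\<^sub>R u + of_int (-j) *\<^sub>R v" unfolding p by (simp add: algebra_simps)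
  then show ?thesis unfolding lattice_mem by blast
qed

lemma lattice_fin:
  assumes D0: "det2 u v \<noteq> 0"
  shows "finite {p \<in> lattice u v. \<bar>fst p\<bar> \<le> R \<and> \<bar>snd p\<bar> \<le> R}"
proof -
  define S where "S = \<bar>fst u\<bar> + \<bar>snd u\<bar> + \<bar>fst v\<bar> + \<bar>snd v\<bar>"
  define N where "N = \<lceil>\<bar>R\<bar> * S / \<bar>det2 u v\<bar>\<rceil>"
  have sub: "{p \<in> lattice u v. \<bar>fst p\<bar> \<le> R \<and> \<bar>snd p\<bar> \<le> R}
      \<subseteq> (\<lambda>(i,j). of_int i *\<^sub>R u + of_int j *\<^sub>R v) ` ({-N..N} \<times> {-N..N})"
  proof
    fix p assume "p \<in> {p \<in> lattice u v. \<bar>fst p\<bar> \<le> R \<and> \<bar>snd p\<bar> \<le> R}"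
    then obtain i j :: int where p: "p = of_int i *\<^sub>R u + of_int j *\<^sub>R v"
      and b: "\<bar>fst p\<bar> \<le> R" "\<bar>snd p\<bar> \<le> R" unfolding lattice_mem by blast
    have S0: "0 \<le> S" by (simp add: S_def)
    have key: "\<bar>of_int m\<bar> \<le> (of_int N :: real)" if m: "det2 u v * of_int m = X" and X: "\<bar>X\<bar> \<le> \<bar>R\<bar> * S" for m :: int and X
    proof -
      have "\<bar>of_int m\<bar> * \<bar>det2 u v\<bar> \<le> \<bar>R\<bar> * S" using m X by (simp add: abs_mult mult.commute)
      then have "\<bar>of_int m\<bar> \<le> \<bar>R\<bar> * S / \<bar>det2 u v\<bar>" using D0 by (simp add: le_divide_eq)
      also have "\<dots> \<le> of_int N" unfolding N_def by (rule le_of_int_ceiling)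
      finally show ?thesis .
    qed
    have "\<bar>fst p * snd v - snd p * fst v\<bar> \<le> \<bar>R\<bar> * \<bar>snd v\<bar> + \<bar>R\<bar> * \<bar>fst v\<bar>"
      by (rule abs_det_le) (use b in auto)
    also have "\<dots> \<le> \<bar>R\<bar> * S" by (simp add: S_def distrib_left[symmetric] mult_left_mono)
    finally have bi: "\<bar>fst p * snd v - snd p * fst v\<bar> \<le> \<bar>R\<bar> * S" .
    have "\<bar>fst u * snd p - snd u * fst p\<bar> \<le> \<bar>fst u\<bar> * \<bar>R\<bar> + \<bar>snd u\<bar> * \<bar>R\<bar>"
      by (rule abs_det_le) (use b in auto)
    also have "\<dots> \<le> \<bar>R\<bar> * S" by (simp add: S_def algebra_simps mult_left_mono)
    finally have bj: "\<bar>fst u * snd p - snd u * fst p\<bar> \<le> \<bar>R\<bar> * S" .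
    have ei: "det2 u v * of_int i = fst p * snd v - snd p * fst v" unfolding p by (simp add: det2_def algebra_simps)
    have ej: "det2 u v * of_int j = fst u * snd p - snd u * fst p" unfolding p by (simp add: det2_def algebra_simps)
    have "\<bar>of_int i\<bar> \<le> (of_int N :: real)" by (rule key[OF ei bi])
    then have i: "\<bar>i\<bar> \<le> N" by linarith
    have "\<bar>of_int j\<bar> \<le> (of_int N :: real)" by (rule key[OF ej bj])
    then have j: "\<bar>j\<bar> \<le> N" by linarith
    show "p \<in> (\<lambda>(i,j). of_int i *\<^sub>R u + of_int j *\<^sub>R v) ` ({-N..N} \<times> {-N..N})"
      using i j p by (intro image_eqI[of _ _ "(i,j)"]) auto
  qed
  show ?thesis by (rule finite_subset[OF sub]) simp
qed


lemma pierce_hit: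
  assumes P: "piercing F P" and R: "{0..a} \<times> {0..b} \<in> F"
  shows "hit P a b"
  unfolding hit_def
proof (intro allI)
  fix x0 y0 :: real
  have "translate (x0, y0) ({0..a} \<times> {0..b}) \<inter> P \<noteq> {}" using P R unfolding piercing_def by blast
  then obtain p where pP: "p \<in> P" and pt: "p \<in> translate (x0, y0) ({0..a} \<times> {0..b})" by blast
  then obtain q where q: "q \<in> {0..a} \<times> {0..b}" and pq: "p = q + (x0, y0)" unfolding translate_def by blast
  show "\<exists>p\<in>P. x0 \<le> fst p \<and> fst p \<le> x0 + a \<and> y0 \<le> snd p \<and> snd p \<le> y0 + b"
    using pP q pq by (intro bexI[of _ p]) (auto simp: mem_Times_iff)
qed

definition Fam0 :: "(real \<times> real) set set" where
  "Fam0 = {{0..1} \<times> {0..4}, {0..2} \<times> {0..2}, {0..4} \<times> {0..1}}"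

lemma lattice_bound:
  assumes D0: "det2 u v \<noteq> 0" and P: "piercing Fam0 (lattice u v)"
  shows "\<bar>det2 u v\<bar> < 63/20"
proof (rule ccontr)
  assume "\<not> \<bar>det2 u v\<bar> < 63/20"
  then have DD: "63/20 \<le> \<bar>det2 u v\<bar>" by simp
  define L where "L = lattice u v"
  have Det: "detprop L (det2 u v)" unfolding L_def by (rule lattice_det)
  have hV: "hit L 1 4" unfolding L_def by (rule pierce_hit[OF P]) (simp add: Fam0_def)
  have hS: "hit L 2 2" unfolding L_def by (rule pierce_hit[OF P]) (simp add: Fam0_def)
  have hH: "hit L 4 1" unfolding L_def by (rule pierce_hit[OF P]) (simp add: Fam0_def)
  have ns: "NS L"
    unfolding NS_def
  proof (intro ballI impI notI)
    fix w assume wL: "w \<in> L" and wnz: "w \<noteq> 0" and wb: "\<bar>fst w\<bar> \<le> 21/20 \<and> \<bar>snd w\<bar> \<le> 21/20"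
    have "\<not> hit L 2 2"
      by (rule short_P2[OF Det DD _ _ wL wnz])
         (use wb lattice_neg lattice_fin[OF D0, of "21/20"] in \<open>auto simp: L_def\<close>)
    then show False using hS by simp
  qed
  obtain a where a: "a \<in> L" "1/1000 \<le> fst a" "fst a \<le> 1/1000 + 1" "-2 \<le> snd a" "snd a \<le> -2 + 4"
    using hitD[OF hV, of "1/1000" "-2"] by blast
  have anz: "a \<noteq> 0" using a(2) by auto
  have a2: "21/20 < \<bar>snd a\<bar>" using ns a anz unfolding NS_def by force
  show False
  proof (cases "snd a > 0")
    case True
    show False by (rule core_all[OF Det DD hH hV hS ns a(1)]) (use a a2 True in auto)
  next
    case False
    show False
    proof (rule core_all[OF detprop_refl[OF Det] _ hit_refl[OF hH] hit_refl[OF hV] hit_refl[OF hS]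
          NS_refl[OF ns], of "yflip a"])
      show "63/20 \<le> \<bar>- det2 u v\<bar>" using DD by simp
      show "yflip a \<in> yflip ` L" using a(1) by simp
    qed (use a a2 False in auto)
  qed
qed




definition pats :: "(int \<times> int) set" where
  "pats = {(0,3),(2,2),(1,1),(3,1),(2,0)}"

definition P0 :: "(real \<times> real) set" where
  "P0 = {(of_int i, of_int j) | i j. (i mod 4, j mod 4) \<in> pats}"

lemma four_cases: "(x::int) mod 4 = 0 \<or> x mod 4 = 1 \<or> x mod 4 = 2 \<or> x mod 4 = 3" by arith

lemma pat22: "\<exists>di\<in>{0,1::int}. \<exists>dj\<in>{0,1::int}. ((i + di) mod 4, (j + dj) mod 4) \<in> pats"
proof -
  have ei: "(i + d) mod 4 = (i mod 4 + d) mod 4" for d :: int by (simp add: mod_add_left_eq)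
  have ej: "(j + d) mod 4 = (j mod 4 + d) mod 4" for d :: int by (simp add: mod_add_left_eq)
  show ?thesis unfolding ei ej using four_cases[of i] four_cases[of j]
    by (elim disjE) (simp_all add: pats_def)
qed

lemma pat14: "\<exists>dj\<in>{0,1,2,3::int}. (i mod 4, (j + dj) mod 4) \<in> pats"
proof -
  have ej: "(j + d) mod 4 = (j mod 4 + d) mod 4" for d :: int by (simp add: mod_add_left_eq)
  show ?thesis unfolding ej using four_cases[of i] four_cases[of j]
    by (elim disjE) (simp_all add: pats_def)
qed

lemma pat41: "\<exists>di\<in>{0,1,2,3::int}. ((i + di) mod 4, j mod 4) \<in> pats"
proof -
  have ei: "(i + d) mod 4 = (i mod 4 + d) mod 4" for d :: int by (simp add: mod_add_left_eq)
  show ?thesis unfolding ei using four_cases[of i] four_cases[of j]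
    by (elim disjE) (simp_all add: pats_def)
qed


lemma mem_translate:
  "(x, y) \<in> translate (x0, y0) ({0..a} \<times> {0..b}) \<longleftrightarrow> x0 \<le> x \<and> x \<le> x0 + a \<and> y0 \<le> y \<and> y \<le> y0 + b"
proof
  assume "(x, y) \<in> translate (x0, y0) ({0..a} \<times> {0..b})"
  then obtain q where "q \<in> {0..a} \<times> {0..b}" "(x, y) = q + (x0, y0)" unfolding translate_def by blast
  then show "x0 \<le> x \<and> x \<le> x0 + a \<and> y0 \<le> y \<and> y \<le> y0 + b" by (cases q) auto
next
  assume h: "x0 \<le> x \<and> x \<le> x0 + a \<and> y0 \<le> y \<and> y \<le> y0 + b"
  have "(x - x0, y - y0) \<in> {0..a} \<times> {0..b}" using h by auto
  moreover have "(x, y) = (x - x0, y - y0) + (x0, y0)" by simp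
  ultimately show "(x, y) \<in> translate (x0, y0) ({0..a} \<times> {0..b})" unfolding translate_def by blast
qed

lemma pt_in:
  assumes "(i mod 4, j mod 4) \<in> pats" "x0 \<le> of_int i" "of_int i \<le> x0 + a" "y0 \<le> of_int j" "of_int j \<le> y0 + b"
  shows "translate (x0, y0) ({0..a} \<times> {0..b}) \<inter> P0 \<noteq> {}"
proof -
  have "(of_int i, of_int j) \<in> translate (x0, y0) ({0..a} \<times> {0..b})"
    using assms by (simp add: mem_translate)
  moreover have "(of_int i, of_int j) \<in> P0" using assms(1) unfolding P0_def by blast
  ultimately show ?thesis by blast
qed

lemma P0_pierce_rect:
  assumes ab: "(a = 1 \<and> b = 4) \<or> (a = 2 \<and> b = 2) \<or> (a = 4 \<and> b = 1)"
  shows "translate v ({0..a} \<times> {0..b}) \<inter> P0 \<noteq> {}"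
proof -
  obtain x0 y0 where v: "v = (x0, y0)" by (cases v)
  define i0 where "i0 = \<lceil>x0\<rceil>"
  define j0 where "j0 = \<lceil>y0\<rceil>"
  have i0: "x0 \<le> of_int i0" "of_int i0 < x0 + 1" unfolding i0_def using ceiling_correct[of x0] by linarith+
  have j0: "y0 \<le> of_int j0" "of_int j0 < y0 + 1" unfolding j0_def using ceiling_correct[of y0] by linarith+
  show ?thesis using ab
  proof (elim disjE conjE)
    assume a: "a = 1" and b: "b = 4"
    obtain dj where dj: "dj \<in> {0,1,2,3::int}" "(i0 mod 4, (j0 + dj) mod 4) \<in> pats" using pat14 by blast
    show ?thesis unfolding v a b
      by (rule pt_in[OF dj(2)]) (use i0 j0 dj(1) in auto)
  next
    assume a: "a = 2" and b: "b = 2"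
    obtain di dj where d: "di \<in> {0,1::int}" "dj \<in> {0,1::int}" "((i0 + di) mod 4, (j0 + dj) mod 4) \<in> pats"
      using pat22 by blast
    show ?thesis unfolding v a b
      by (rule pt_in[OF d(3)]) (use i0 j0 d(1,2) in auto)
  next
    assume a: "a = 4" and b: "b = 1"
    obtain di where di: "di \<in> {0,1,2,3::int}" "((i0 + di) mod 4, j0 mod 4) \<in> pats" using pat41 by blast
    show ?thesis unfolding v a b
      by (rule pt_in[OF di(2)]) (use i0 j0 di(1) in auto)
  qed
qed


lemma count_bound:
  fixes r :: real
  assumes r: "1 \<le> r"
  shows "finite (P0 \<inter> ({-r..r} \<times> {-r..r}))"
    and "real (card (P0 \<inter> ({-r..r} \<times> {-r..r}))) \<le> 5 * (r/2 + 5)^2"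
proof -
  define N where "N = \<lceil>r/4\<rceil> + 1"
  define g :: "(int \<times> int) \<times> (int \<times> int) \<Rightarrow> real \<times> real"
    where "g = (\<lambda>((a,b),(i,j)). (of_int (4*i+a), of_int (4*j+b)))"
  define T where "T = pats \<times> ({-N..N} \<times> {-N..N})"
  have divb: "\<bar>k div 4\<bar> \<le> N" if k: "- r \<le> of_int k" "of_int k \<le> r" for k :: int
  proof -
    have m: "0 \<le> k mod 4" "k mod 4 \<le> 3" by simp_all
    have e: "k = 4 * (k div 4) + k mod 4" by simp
    have "of_int k = 4 * of_int (k div 4) + (of_int (k mod 4) :: real)"
      by (metis e of_int_add of_int_mult of_int_numeral)
    moreover have "0 \<le> (of_int (k mod 4) :: real)" "(of_int (k mod 4) :: real) \<le> 3" using m by simp_all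
    moreover have "r/4 \<le> of_int \<lceil>r/4\<rceil>" by (rule le_of_int_ceiling)
    ultimately have "of_int \<bar>k div 4\<bar> \<le> (of_int N :: real)" using k unfolding N_def by (simp add: abs_le_iff) linarith
    then show ?thesis by linarith
  qed
  have sub: "P0 \<inter> ({-r..r} \<times> {-r..r}) \<subseteq> g ` T"
  proof
    fix p assume "p \<in> P0 \<inter> ({-r..r} \<times> {-r..r})"
    then obtain i j where p: "p = (of_int i, of_int j)" and pat: "(i mod 4, j mod 4) \<in> pats"
      and bi: "- r \<le> of_int i" "of_int i \<le> r" and bj: "- r \<le> of_int j" "of_int j \<le> r"
      unfolding P0_def by auto
    have "((i mod 4, j mod 4), (i div 4, j div 4)) \<in> T"
      unfolding T_def using pat divb[OF bi] divb[OF bj] by auto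
    moreover have "p = g ((i mod 4, j mod 4), (i div 4, j div 4))"
    proof -
      have ei: "4 * (i div 4) + i mod 4 = i" by (rule mult_div_mod_eq)
      have ej: "4 * (j div 4) + j mod 4 = j" by (rule mult_div_mod_eq)
      show ?thesis unfolding p g_def by (simp only: prod.case ei ej)
    qed
    ultimately show "p \<in> g ` T" by blast
  qed
  have finT: "finite T" unfolding T_def pats_def by simp
  show "finite (P0 \<inter> ({-r..r} \<times> {-r..r}))" by (rule finite_subset[OF sub]) (use finT in simp)
  have "card (P0 \<inter> ({-r..r} \<times> {-r..r})) \<le> card (g ` T)" by (rule card_mono) (use finT sub in auto)
  also have "\<dots> \<le> card T" using finT by (rule card_image_le)
  also have "card T = 5 * (nat (2*N+1) * nat (2*N+1))"
    unfolding T_def by (simp add: card_cartesian_product pats_def)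
  finally have c: "real (card (P0 \<inter> ({-r..r} \<times> {-r..r}))) \<le> 5 * (of_int (2*N+1) * of_int (2*N+1))"
  proof -
    assume h: "card (P0 \<inter> ({-r..r} \<times> {-r..r})) \<le> 5 * (nat (2*N+1) * nat (2*N+1))"
    have N0: "0 \<le> N" unfolding N_def using r by (simp add: add_increasing)
    have "real (card (P0 \<inter> ({-r..r} \<times> {-r..r}))) \<le> real (5 * (nat (2*N+1) * nat (2*N+1)))"
      using h by linarith
    also have "\<dots> = 5 * (of_int (2*N+1) * of_int (2*N+1))" using N0 by simp
    finally show ?thesis .
  qed
  have Nb: "of_int N \<le> r/4 + 2" unfolding N_def using ceiling_correct[of "r/4"] by simp
  have N0: "0 \<le> (of_int N :: real)" unfolding N_def using r by (simp add: add_increasing)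
  have b: "(of_int (2*N+1) :: real) \<le> r/2 + 5" using Nb by simp
  have b0: "0 \<le> (of_int (2*N+1) :: real)" using N0 by simp
  have "(of_int (2*N+1) :: real) * of_int (2*N+1) \<le> (r/2+5) * (r/2+5)"
    by (rule mult_mono) (use b b0 in auto)
  then show "real (card (P0 \<inter> ({-r..r} \<times> {-r..r}))) \<le> 5 * (r/2 + 5)^2"
    using c by (simp add: power2_eq_square)
qed

lemma density_P0: "density P0 \<le> ereal (63/200)"
  unfolding density_def
proof (rule Limsup_bounded)
  show "\<forall>\<^sub>F r in at_top. box_count P0 r / ereal ((2 * r)\<^sup>2) \<le> ereal (63/200)"
    unfolding eventually_at_top_linorder
  proof (intro exI allI impI)
    fix r :: real assume r: "3000 \<le> r"
    have fin: "finite (P0 \<inter> ({-r..r} \<times> {-r..r}))" using count_bound(1)[of r] r by simp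
    have cb: "real (card (P0 \<inter> ({-r..r} \<times> {-r..r}))) \<le> 5 * (r/2 + 5)^2" using count_bound(2)[of r] r by simp
    have rr: "3000 * r \<le> r * r" using r by (intro mult_right_mono) auto
    have q1: "5 * (r/2 + 5)^2 = 5/4*(r*r) + 25*r + 125" by (simp add: power2_eq_square algebra_simps)
    have q2: "63/200 * (2 * r)\<^sup>2 = 63/50*(r*r)" by (simp add: power2_eq_square algebra_simps)
    have "5 * (r/2 + 5)^2 \<le> 63/200 * (2 * r)\<^sup>2" using rr r q1 q2 by linarith
    then have le: "real (card (P0 \<inter> ({-r..r} \<times> {-r..r}))) \<le> 63/200 * (2 * r)\<^sup>2" using cb by linarith
    have pos: "0 < (2 * r)\<^sup>2" using r by simp
    have "real (card (P0 \<inter> ({-r..r} \<times> {-r..r}))) / (2 * r)\<^sup>2 \<le> 63/200"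
      using le pos by (simp add: divide_le_eq)
    then show "box_count P0 r / ereal ((2 * r)\<^sup>2) \<le> ereal (63/200)"
      unfolding box_count_def using fin pos by simp
  qed
qed


lemma rect_is_rect: "0 < a \<Longrightarrow> 0 < b \<Longrightarrow> is_rect ({0..a} \<times> {0..b})"
  unfolding is_rect_def by blast

theorem theorem4:
  shows "\<exists>F0 :: (real \<times> real) set set. \<exists>\<epsilon>::real.
           finite F0 \<and> card F0 = 3 \<and> (\<forall>R\<in>F0. is_rect R) \<and> \<epsilon> > 0 \<and>
           pi_lat F0 \<ge> pi_dens F0 + ereal \<epsilon>"
proof -
  define A :: "(real \<times> real) set" where "A = {0..1} \<times> {0..4}"
  define B :: "(real \<times> real) set" where "B = {0..2} \<times> {0..2}"
  define C :: "(real \<times> real) set" where "C = {0..4} \<times> {0..1}"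
  have FA: "Fam0 = {A, B, C}" unfolding Fam0_def A_def B_def C_def by simp
  have AB: "A \<noteq> B"
  proof
    assume "A = B"
    moreover have "(2, 0) \<in> B" unfolding B_def by simp
    moreover have "(2, 0) \<notin> A" unfolding A_def by simp
    ultimately show False by simp
  qed
  have AC: "A \<noteq> C"
  proof
    assume "A = C"
    moreover have "(0, 4) \<in> A" unfolding A_def by simp
    moreover have "(0, 4) \<notin> C" unfolding C_def by simp
    ultimately show False by simp
  qed
  have BC: "B \<noteq> C"
  proof
    assume "B = C"
    moreover have "(0, 2) \<in> B" unfolding B_def by simp
    moreover have "(0, 2) \<notin> C" unfolding C_def by simp
    ultimately show False by simp
  qed
  have fin: "finite Fam0" unfolding FA by simp
  have card: "card Fam0 = 3" unfolding FA using AB AC BC by simp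
  have rect: "\<forall>R\<in>Fam0. is_rect R" unfolding Fam0_def by (auto intro: rect_is_rect)
  have lat: "ereal (20/63) \<le> pi_lat Fam0"
    unfolding pi_lat_def
  proof (rule Inf_greatest)
    fix x assume "x \<in> {ereal (1 / \<bar>det2 u v\<bar>) | u v. det2 u v \<noteq> 0 \<and> piercing Fam0 (lattice u v)}"
    then obtain u v where x: "x = ereal (1 / \<bar>det2 u v\<bar>)" and d: "det2 u v \<noteq> 0"
      and p: "piercing Fam0 (lattice u v)" by blast
    have lt: "\<bar>det2 u v\<bar> < 63/20" by (rule lattice_bound[OF d p])
    have pos: "0 < \<bar>det2 u v\<bar>" using d by simp
    have "20/63 \<le> 1 / \<bar>det2 u v\<bar>" using lt pos by (simp add: le_divide_eq)
    then show "ereal (20/63) \<le> x" unfolding x by simp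
  qed
  have pP: "piercing Fam0 P0"
    unfolding piercing_def
  proof (intro ballI allI)
    fix R v assume "R \<in> Fam0"
    then show "translate v R \<inter> P0 \<noteq> {}"
      using P0_pierce_rect[of 1 4 v] P0_pierce_rect[of 2 2 v] P0_pierce_rect[of 4 1 v]
      unfolding Fam0_def by auto
  qed
  have dens: "pi_dens Fam0 \<le> ereal (63/200)"
  proof -
    have "pi_dens Fam0 \<le> density P0" unfolding pi_dens_def by (rule Inf_lower) (use pP in blast)
    also have "\<dots> \<le> ereal (63/200)" by (rule density_P0)
    finally show ?thesis .
  qed
  have "pi_dens Fam0 + ereal (31/12600) \<le> ereal (63/200) + ereal (31/12600)"
    by (rule add_right_mono[OF dens])
  also have "\<dots> = ereal (20/63)" by simp
  also have "\<dots> \<le> pi_lat Fam0" by (rule lat)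
  finally have main: "pi_dens Fam0 + ereal (31/12600) \<le> pi_lat Fam0" .
  show ?thesis
    by (rule exI[of _ Fam0], rule exI[of _ "31/12600"]) (use fin card rect main in auto)
qed

end
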